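(* For every positive integer $m$ there is no homomorphism $\mathrm{KG}(6,2)\to S_m$.
   Context: $\mathrm{KG}(6,2)$ is the Kneser graph whose vertices are the $2$-element subsets of $\{1,\dots,6\}$, two being adjacent iff disjoint. The symmetric shift graph $S_m$ has vertex set $\{(i,j):1\le i,j\le m,\ i\ne j\}$, and $(i,j)$ is adjacent to $(k,\ell)$ iff $j=k$ or $i=\ell$. A homomorphism is an edge-preserving map between vertex sets. *)

theory Defs
  imports Main
begin

definition graph_hom ::
  "'a set \<Rightarrow> ('a \<Rightarrow> 'a \<Rightarrow> bool) \<Rightarrow> 'b set \<Rightarrow> ('b \<Rightarrow> 'b \<Rightarrow> bool) \<Rightarrow> ('a \<Rightarrow> 'b) \<Rightarrow> bool" where
  "graph_hom V1 E1 V2 E2 f \<longleftrightarrow>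
     (\<forall>v\<in>V1. f v \<in> V2) \<and> (\<forall>u\<in>V1. \<forall>v\<in>V1. E1 u v \<longrightarrow> E2 (f u) (f v))"

definition kneser_vertices :: "nat \<Rightarrow> nat \<Rightarrow> nat set set" where
  "kneser_vertices n k = {A. A \<subseteq> {1..n} \<and> card A = k}"

definition kneser_adj :: "nat set \<Rightarrow> nat set \<Rightarrow> bool" where
  "kneser_adj A B \<longleftrightarrow> A \<inter> B = {}"

definition shift_vertices :: "nat \<Rightarrow> (nat \<times> nat) set" where
  "shift_vertices m = {(i, j). i \<in> {1..m} \<and> j \<in> {1..m} \<and> i \<noteq> j}"

definition shift_adj :: "nat \<times> nat \<Rightarrow> nat \<times> nat \<Rightarrow> bool" where
  "shift_adj p q \<longleftrightarrow> snd p = fst q \<or> fst p = snd q"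

end

theory Submission
  imports Defs
begin

lemma core:
  fixes a14 b14 a15 b15 a16 b16 a23 b23 a25 b25 a26 b26 a34 b34 a36 b36 a46 b46 a56 b56 :: nat
  assumes "a14 \<noteq> b14"
  and "a15 \<noteq> b15"
  and "a16 \<noteq> b16"
  and "a23 \<noteq> b23"
  and "a25 \<noteq> b25"
  and "a26 \<noteq> b26"
  and "a34 \<noteq> b34"
  and "a36 \<noteq> b36"
  and "a46 \<noteq> b46"
  and "a56 \<noteq> b56"
  and "b14 = a23 \<or> a14 = b23"
  and "b14 = a25 \<or> a14 = b25"
  and "b14 = a26 \<or> a14 = b26"
  and "b14 = a36 \<or> a14 = b36"
  and "b14 = a56 \<or> a14 = b56"
  and "b15 = a23 \<or> a15 = b23"
  and "b15 = a26 \<or> a15 = b26"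
  and "b15 = a34 \<or> a15 = b34"
  and "b15 = a36 \<or> a15 = b36"
  and "b15 = a46 \<or> a15 = b46"
  and "b16 = a23 \<or> a16 = b23"
  and "b16 = a25 \<or> a16 = b25"
  and "b16 = a34 \<or> a16 = b34"
  and "b23 = a46 \<or> a23 = b46"
  and "b23 = a56 \<or> a23 = b56"
  and "b25 = a34 \<or> a25 = b34"
  and "b25 = a36 \<or> a25 = b36"
  and "b25 = a46 \<or> a25 = b46"
  and "b26 = a34 \<or> a26 = b34"
  and "b34 = a56 \<or> a34 = b56"
  shows False
  using assms by (smt (z3))

theorem mainTheorem5:
  fixes m :: nat
  assumes "m \<ge> 1"
  shows "\<not> (\<exists>f. graph_hom (kneser_vertices 6 2) kneser_adj (shift_vertices m) shift_adj f)"
proof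
  assume "\<exists>f. graph_hom (kneser_vertices 6 2) kneser_adj (shift_vertices m) shift_adj f"
  then obtain f where h: "graph_hom (kneser_vertices 6 2) kneser_adj (shift_vertices m) shift_adj f" by blast
  have V: "\<And>x y::nat. x \<noteq> y \<Longrightarrow> x \<in> {1..6} \<Longrightarrow> y \<in> {1..6} \<Longrightarrow> {x,y} \<in> kneser_vertices 6 2"
    by (auto simp: kneser_vertices_def)
  have N: "\<And>v. v \<in> kneser_vertices 6 2 \<Longrightarrow> fst (f v) \<noteq> snd (f v)"
    using h by (fastforce simp: graph_hom_def shift_vertices_def)
  have Ed: "\<And>u v. u \<in> kneser_vertices 6 2 \<Longrightarrow> v \<in> kneser_vertices 6 2 \<Longrightarrow> u \<inter> v = {} \<Longrightarrow>
     snd (f u) = fst (f v) \<or> fst (f u) = snd (f v)"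
    using h by (auto simp: graph_hom_def kneser_adj_def shift_adj_def)
  show False
    by (rule core[of "fst (f {1,4})" "snd (f {1,4})" "fst (f {1,5})" "snd (f {1,5})" "fst (f {1,6})" "snd (f {1,6})" "fst (f {2,3})" "snd (f {2,3})" "fst (f {2,5})" "snd (f {2,5})" "fst (f {2,6})" "snd (f {2,6})" "fst (f {3,4})" "snd (f {3,4})" "fst (f {3,6})" "snd (f {3,6})" "fst (f {4,6})" "snd (f {4,6})" "fst (f {5,6})" "snd (f {5,6})"], (rule N Ed; (rule V | simp); simp)+)
qed

end
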